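(* Let $\mathbb{K}$, $T_0,T_{-1}$, $I^+$, $P$ and $\mathcal{N}_n$ be as in the context, let $f_n=P^n(\chi_{I^+})$, and let $\lambda(I^+)$ denote the Lebesgue measure of $I^+$. Then for every $n\in\mathbb{N}$, \[\int_{I^+}(f_n(x))^2\,dx\le\lambda(I^+)\left(\frac{|\beta_1\cdots\beta_d|}{4}\right)^n\mathcal{N}_n.\]
   Context: Let $\beta\in(1,2)$ be an algebraic integer none of whose Galois conjugates has modulus $1$. List all its Galois conjugates as $\beta=\beta_1,\dots,\beta_d,\beta_{d+1},\dots,\beta_{d+s},\beta_{d+s+1}$, where $|\beta_1|,\dots,|\beta_d|>1$, $|\beta_{d+1}|,\dots,|\beta_{d+s}|<1$, and $\beta_{d+s+1}$ is real with $|\beta_{d+s+1}|>1$. For $z\in\mathbb{C}$ let $\mathbb{F}_z=\mathbb{R}$ if $z\in\mathbb{R}$ and $\mathbb{F}_z=\mathbb{C}$ otherwise, and let $\mathbb{K}=\prod_{j=1}^d\mathbb{F}_{\beta_j}$ with Lebesgue measure ($\mathbb{C}\cong\mathbb{R}^2$). For $i\in\mathbb{Z}$ let $T_i(x_1,\dots,x_d)=(\beta_1x_1+i,\dots,\beta_dx_d+i)$. For $j\le d$ let $I^+_{\beta_j}=[0,\frac{1}{\beta_j-1}]$ if $\beta_j>1$, $I^+_{\beta_j}=\{x\in\mathbb{R}:|x|\le\frac{1}{|\beta_j|-1}\}$ if $\beta_j<-1$, $I^+_{\beta_j}=\{z\in\mathbb{C}:|z|\le\frac{1}{|\beta_j|-1}\}$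 if $\beta_j\notin\mathbb{R}$, and $I^+=\prod_{j=1}^d I^+_{\beta_j}$. The operator $P$ acts on functions $f:\mathbb{K}\to\mathbb{R}$ by $Pf=\frac{|\beta_1\cdots\beta_d|}{2}(f\circ T_0+f\circ T_{-1})$. The number of overlaps at level $n$ is \[\mathcal{N}_n=\#\left\{(a_1\cdots a_n,b_1\cdots b_n)\in\{0,-1\}^{n}\times\{0,-1\}^n: T_{a_1}^{-1}\circ\cdots\circ T_{a_n}^{-1}(I^+)\cap T_{b_1}^{-1}\circ\cdots\circ T_{b_n}^{-1}(I^+)\neq\varnothing\right\}.\] *)

theory Defs
  imports "HOL-Analysis.Analysis" "HOL-Computational_Algebra.Polynomial"
begin

text \<open>Galois conjugates of an algebraic number x over Q: the roots of its minimal
polynomial, i.e. the complex z vanishing on every rational polynomial that vanishes at x.\<close>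
definition galois_conjugates :: "complex \<Rightarrow> complex set" where
  "galois_conjugates x =
     {z. \<forall>p :: rat poly. poly (map_poly of_rat p) x = 0 \<longrightarrow> poly (map_poly of_rat p) z = 0}"

text \<open>The space K = prod_{j=1..d} F_{b j}, realised as extensional functions
{1..d} -> complex, with Lebesgue measure on each factor (real line embedded in C
for real b j, planar Lebesgue measure on C otherwise).\<close>
definition Kmeasure :: "(nat \<Rightarrow> complex) \<Rightarrow> nat \<Rightarrow> (nat \<Rightarrow> complex) measure" where
  "Kmeasure b d = PiM {1..d}
     (\<lambda>j. if b j \<in> \<real> then distr lborel borel complex_of_real else (lborel :: complex measure))"

definition Tmap :: "(nat \<Rightarrow> complex) \<Rightarrow> nat \<Rightarrow> int \<Rightarrow> (nat \<Rightarrow> complex) \<Rightarrow> (nat \<Rightarrow> complex)" where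
  "Tmap b d i x = restrict (\<lambda>j. b j * x j + of_int i) {1..d}"

definition Tinv :: "(nat \<Rightarrow> complex) \<Rightarrow> nat \<Rightarrow> int \<Rightarrow> (nat \<Rightarrow> complex) \<Rightarrow> (nat \<Rightarrow> complex)" where
  "Tinv b d i y = restrict (\<lambda>j. (y j - of_int i) / b j) {1..d}"

definition Iplus_factor :: "complex \<Rightarrow> complex set" where
  "Iplus_factor z =
     (if z \<in> \<real> \<and> Re z > 1 then {complex_of_real t | t. 0 \<le> t \<and> t \<le> 1 / (Re z - 1)}
      else if z \<in> \<real> \<and> Re z < -1 then {complex_of_real t | t. \<bar>t\<bar> \<le> 1 / (\<bar>Re z\<bar> - 1)}
      else cball 0 (1 / (cmod z - 1)))"

definition Iplus :: "(nat \<Rightarrow> complex) \<Rightarrow> nat \<Rightarrow> (nat \<Rightarrow> complex) set" where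
  "Iplus b d = PiE {1..d} (\<lambda>j. Iplus_factor (b j))"

definition Pop :: "(nat \<Rightarrow> complex) \<Rightarrow> nat \<Rightarrow> ((nat \<Rightarrow> complex) \<Rightarrow> real) \<Rightarrow> ((nat \<Rightarrow> complex) \<Rightarrow> real)" where
  "Pop b d f = (\<lambda>x. cmod (\<Prod>j\<in>{1..d}. b j) / 2 * (f (Tmap b d 0 x) + f (Tmap b d (-1) x)))"

definition words :: "nat \<Rightarrow> int list set" where
  "words n = {w. length w = n \<and> set w \<subseteq> {0, -1}}"

definition Tinv_word :: "(nat \<Rightarrow> complex) \<Rightarrow> nat \<Rightarrow> int list \<Rightarrow> (nat \<Rightarrow> complex) \<Rightarrow> (nat \<Rightarrow> complex)" where
  "Tinv_word b d w = foldr (\<lambda>i g. Tinv b d i \<circ> g) w id"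

definition overlaps :: "(nat \<Rightarrow> complex) \<Rightarrow> nat \<Rightarrow> nat \<Rightarrow> nat" where
  "overlaps b d n = card {(a, c). a \<in> words n \<and> c \<in> words n \<and>
      Tinv_word b d a ` Iplus b d \<inter> Tinv_word b d c ` Iplus b d \<noteq> {}}"

end

theory Submission
  imports Defs
begin

definition Tw :: "(nat \<Rightarrow> complex) \<Rightarrow> nat \<Rightarrow> int list \<Rightarrow> (nat \<Rightarrow> complex) \<Rightarrow> (nat \<Rightarrow> complex)" where
  "Tw b d w = foldr (\<lambda>i g. g \<circ> Tmap b d i) w id"

lemma Tw_Nil[simp]: "Tw b d [] x = x" by (simp add: Tw_def)
lemma Tw_Cons[simp]: "Tw b d (i # w) x = Tw b d w (Tmap b d i x)" by (simp add: Tw_def)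
lemma Tinv_word_Nil[simp]: "Tinv_word b d [] y = y" by (simp add: Tinv_word_def)
lemma Tinv_word_Cons[simp]: "Tinv_word b d (i # w) y = Tinv b d i (Tinv_word b d w y)"
  by (simp add: Tinv_word_def)

lemma words_Suc: "words (Suc n) = (\<lambda>w. 0 # w) ` words n \<union> (\<lambda>w. (-1) # w) ` words n"
  by (auto simp: words_def length_Suc_conv)

lemma words_0[simp]: "words 0 = {[]}" by (auto simp: words_def)

lemma finite_words: "finite (words n)"
proof -
  have "words n = {xs. set xs \<subseteq> {0,-1} \<and> length xs = n}" by (auto simp: words_def)
  then show ?thesis using finite_lists_length_eq[of "{0,-1::int}" n] by simp
qed

lemma Pop_pow:
  "(Pop b d ^^ n) f x = (cmod (\<Prod>j\<in>{1..d}. b j) / 2) ^ n * (\<Sum>w\<in>words n. f (Tw b d w x))"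
proof (induction n arbitrary: x)
  case 0
  then show ?case by simp
next
  case (Suc n)
  let ?c = "cmod (\<Prod>j\<in>{1..d}. b j) / 2"
  have disj: "(\<lambda>w. 0 # w) ` words n \<inter> (\<lambda>w. (-1) # w) ` words n = {}" by auto
  have s: "(\<Sum>w\<in>words (Suc n). f (Tw b d w x)) =
     (\<Sum>w\<in>words n. f (Tw b d w (Tmap b d 0 x))) + (\<Sum>w\<in>words n. f (Tw b d w (Tmap b d (-1) x)))"
    unfolding words_Suc
    by (subst sum.union_disjoint) (auto simp: finite_words sum.reindex inj_on_def)
  have "(Pop b d ^^ Suc n) f x = ?c * ((Pop b d ^^ n) f (Tmap b d 0 x) + (Pop b d ^^ n) f (Tmap b d (-1) x))"
    by (simp only: funpow.simps comp_apply Pop_def)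
  then show ?case
    by (simp add: Suc s algebra_simps)
qed

lemma Tmap_ext: "Tmap b d i x \<in> extensional {1..d}" by (simp add: Tmap_def)
lemma Tinv_ext: "Tinv b d i x \<in> extensional {1..d}" by (simp add: Tinv_def)
lemmas Tmap_ext' = Tmap_ext[simplified]
lemmas Tinv_ext' = Tinv_ext[simplified]

lemma Tw_ext: "x \<in> extensional {1..d} \<Longrightarrow> Tw b d w x \<in> extensional {1..d}"
  by (induction w arbitrary: x) (auto simp: Tmap_ext Tmap_ext')

lemma Tinv_word_ext: "y \<in> extensional {1..d} \<Longrightarrow> Tinv_word b d w y \<in> extensional {1..d}"
  by (induction w) (auto simp: Tinv_ext Tinv_ext')

lemma Tmap_Tinv:
  assumes "\<forall>j\<in>{1..d}. b j \<noteq> 0" "y \<in> extensional {1..d}"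
  shows "Tmap b d i (Tinv b d i y) = y"
  using assms by (auto simp: Tmap_def Tinv_def extensional_def fun_eq_iff)

lemma Tinv_Tmap:
  assumes "\<forall>j\<in>{1..d}. b j \<noteq> 0" "x \<in> extensional {1..d}"
  shows "Tinv b d i (Tmap b d i x) = x"
  using assms by (auto simp: Tmap_def Tinv_def extensional_def fun_eq_iff)

lemmas Tw_ext' = Tw_ext[simplified]
lemmas Tinv_word_ext' = Tinv_word_ext[simplified]

lemma Tw_Tinv_word:
  assumes "\<forall>j\<in>{1..d}. b j \<noteq> 0" "y \<in> extensional {1..d}"
  shows "Tw b d w (Tinv_word b d w y) = y"
  using assms(2)
  by (induction w arbitrary: y) (simp_all add: Tmap_Tinv[OF assms(1)] Tinv_word_ext Tinv_word_ext')

lemma Tinv_word_Tw: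
  assumes "\<forall>j\<in>{1..d}. b j \<noteq> 0" "x \<in> extensional {1..d}"
  shows "Tinv_word b d w (Tw b d w x) = x"
  using assms(2)
  by (induction w arbitrary: x) (simp_all add: Tinv_Tmap[OF assms(1)] Tmap_ext Tmap_ext')

lemma Tinv_word_image:
  assumes "\<forall>j\<in>{1..d}. b j \<noteq> 0"
  shows "Tinv_word b d w ` Iplus b d = {x \<in> extensional {1..d}. Tw b d w x \<in> Iplus b d}"
proof -
  have ext: "Iplus b d \<subseteq> extensional {1..d}" by (auto simp: Iplus_def PiE_def)
  show ?thesis
  proof safe
    fix y assume "y \<in> Iplus b d"
    then show "Tinv_word b d w y \<in> extensional {1..d}" using ext Tinv_word_ext by blast
    show "Tw b d w (Tinv_word b d w y) \<in> Iplus b d" using \<open>y \<in> Iplus b d\<close> ext Tw_Tinv_word[OF assms] by auto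
  next
    fix x assume "x \<in> extensional {1..d}" "Tw b d w x \<in> Iplus b d"
    then show "x \<in> Tinv_word b d w ` Iplus b d"
      by (metis Tinv_word_Tw[OF assms] image_eqI)
  qed
qed

primrec phi :: "int list \<Rightarrow> complex \<Rightarrow> complex \<Rightarrow> complex" where
  "phi [] bb z = z"
| "phi (i # w) bb z = phi w bb (bb * z + of_int i)"

primrec psi :: "int list \<Rightarrow> complex \<Rightarrow> complex" where
  "psi [] bb = 0"
| "psi (i # w) bb = bb ^ length w * of_int i + psi w bb"

lemma phi_eq: "phi w bb z = bb ^ length w * z + psi w bb"
  by (induction w arbitrary: z) (simp_all add: algebra_simps)

lemma psi_real: "bb \<in> \<real> \<Longrightarrow> psi w bb \<in> \<real>"
  by (induction w) auto

lemma Tw_apply: "j \<in> {1..d} \<Longrightarrow> Tw b d w x j = phi w (b j) (x j)"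
  by (induction w arbitrary: x) (simp_all add: Tmap_def)

lemmas Tw_apply' = Tw_apply[simplified]

lemma Tinv_word_image_PiE:
  assumes "\<forall>j\<in>{1..d}. b j \<noteq> 0"
  shows "Tinv_word b d w ` Iplus b d = PiE {1..d} (\<lambda>j. {z. phi w (b j) z \<in> Iplus_factor (b j)})"
  unfolding Tinv_word_image[OF assms]
  by (auto simp: Iplus_def PiE_def Pi_def Tw_apply Tw_apply' Tw_ext Tw_ext')

definition Mf :: "complex \<Rightarrow> complex measure" where
  "Mf bb = (if bb \<in> \<real> then distr lborel borel complex_of_real else lborel)"

lemma Kmeasure_Mf: "Kmeasure b d = PiM {1..d} (\<lambda>j. Mf (b j))"
  by (simp add: Kmeasure_def Mf_def)

lemma sets_Mf[simp, measurable_cong]: "sets (Mf bb) = sets borel"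
  by (simp add: Mf_def)

lemma space_Mf[simp]: "space (Mf bb) = UNIV"
  by (simp add: Mf_def)

lemma closed_Iplus_factor: "closed (Iplus_factor z)"
proof -
  have c1: "{complex_of_real t | t. 0 \<le> t \<and> t \<le> L} = complex_of_real ` {0..L}" for L
    by auto
  have c2: "{complex_of_real t | t. \<bar>t\<bar> \<le> L} = complex_of_real ` {-L..L}" for L
    by force
  have cc: "closed (complex_of_real ` {a..b})" for a b
    by (intro compact_imp_closed compact_continuous_image continuous_intros compact_Icc)
  show ?thesis unfolding Iplus_factor_def c1 c2 using cc by auto
qed

lemma bounded_Iplus_factor: "bounded (Iplus_factor z)"
proof -
  have c1: "{complex_of_real t | t. 0 \<le> t \<and> t \<le> L} = complex_of_real ` {0..L}" for L
    by auto
  have c2: "{complex_of_real t | t. \<bar>t\<bar> \<le> L} = complex_of_real ` {-L..L}" for L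
    by force
  have cc: "bounded (complex_of_real ` {a..b})" for a b
    by (intro compact_imp_bounded compact_continuous_image continuous_intros compact_Icc)
  show ?thesis unfolding Iplus_factor_def c1 c2 using cc by auto
qed

lemma Iplus_factor_borel[measurable]: "Iplus_factor z \<in> sets borel"
  using closed_Iplus_factor by (rule borel_closed)

lemma sigma_finite_Mf: "sigma_finite_measure (Mf bb)"
proof (cases "bb \<in> \<real>")
  case False
  then show ?thesis by (simp add: Mf_def lborel.sigma_finite_measure_axioms)
next
  case True
  let ?M = "distr lborel borel complex_of_real"
  have "countable (range (\<lambda>n::nat. cball (0::complex) (real n)))" by simp
  moreover have "range (\<lambda>n::nat. cball (0::complex) (real n)) \<subseteq> sets ?M" by auto
  moreover have "\<Union> (range (\<lambda>n::nat. cball (0::complex) (real n))) = space ?M"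
    by (auto simp: real_arch_simple)
  moreover have "\<forall>a\<in>range (\<lambda>n::nat. cball (0::complex) (real n)). emeasure ?M a \<noteq> \<infinity>"
  proof
    fix a assume "a \<in> range (\<lambda>n::nat. cball (0::complex) (real n))"
    then obtain n where a: "a = cball 0 (real n)" by auto
    have "emeasure ?M a = emeasure lborel (complex_of_real -` a)"
      by (subst emeasure_distr) (auto simp: a)
    also have "complex_of_real -` a = cball 0 (real n)" by (auto simp: a)
    finally show "emeasure ?M a \<noteq> \<infinity>" using emeasure_bounded_finite[of "cball (0::real) (real n)"] by simp
  qed
  ultimately show ?thesis using True unfolding Mf_def
    by (intro sigma_finite_measure.intro) (auto intro!: exI[of _ "range (\<lambda>n::nat. cball (0::complex) (real n))"])
qed

lemma factor_measure:
  assumes bb: "cmod bb > 1" and psi: "bb \<in> \<real> \<Longrightarrow> \<psi> \<in> \<real>"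
  shows "\<exists>k \<ge> cmod bb ^ m. emeasure (Mf bb) (Iplus_factor bb)
            = ennreal k * emeasure (Mf bb) {z. bb ^ m * z + \<psi> \<in> Iplus_factor bb}"
proof (cases "bb \<in> \<real>")
  case True
  then obtain \<beta> where b: "bb = complex_of_real \<beta>" using Reals_cases by blast
  obtain p where p: "\<psi> = complex_of_real p" using psi[OF True] Reals_cases by blast
  define F where "F = Iplus_factor bb"
  define S where "S = complex_of_real -` F"
  have F[measurable]: "F \<in> sets borel" by (simp add: F_def)
  have S[measurable]: "S \<in> sets borel" unfolding S_def
    using measurable_sets_borel[of complex_of_real borel F] by simp
  have pre[measurable]: "{z. bb ^ m * z + \<psi> \<in> F} \<in> sets borel" by measurable
  have nz: "\<beta> ^ m \<noteq> 0" using bb b by auto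
  have e1: "emeasure (Mf bb) F = emeasure lborel S"
    using True by (simp add: Mf_def emeasure_distr S_def)
  have "complex_of_real -` {z. bb ^ m * z + \<psi> \<in> F} = (\<lambda>x. p + \<beta> ^ m * x) -` S"
    by (auto simp: S_def b p algebra_simps)
  then have e2: "emeasure (Mf bb) {z. bb ^ m * z + \<psi> \<in> F} = emeasure lborel ((\<lambda>x. p + \<beta> ^ m * x) -` S)"
    using True by (simp add: Mf_def emeasure_distr)
  have "emeasure lborel S = emeasure (density (distr lborel borel (\<lambda>x. p + \<beta> ^ m * x)) (\<lambda>_. ennreal \<bar>\<beta> ^ m\<bar>)) S"
    using lborel_real_affine[OF nz, of p] by simp
  also have "\<dots> = ennreal \<bar>\<beta> ^ m\<bar> * emeasure lborel ((\<lambda>x. p + \<beta> ^ m * x) -` S)"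
    by (simp add: emeasure_density_const emeasure_distr)
  finally have "emeasure (Mf bb) F = ennreal \<bar>\<beta> ^ m\<bar> * emeasure (Mf bb) {z. bb ^ m * z + \<psi> \<in> F}"
    using e1 e2 by simp
  moreover have "\<bar>\<beta> ^ m\<bar> = cmod bb ^ m" by (simp add: b power_abs)
  ultimately show ?thesis unfolding F_def by (intro exI[of _ "cmod bb ^ m"]) simp
next
  case False
  define R where "R = 1 / (cmod bb - 1)"
  have F: "Iplus_factor bb = cball 0 R" using False by (simp add: Iplus_factor_def R_def)
  define c where "c = cmod bb ^ m"
  have c1: "c \<ge> 1" using bb by (simp add: c_def one_le_power)
  have bm: "bb ^ m \<noteq> 0" using bb by auto
  define p where "p = - \<psi> / bb ^ m"
  have pre: "{z. bb ^ m * z + \<psi> \<in> Iplus_factor bb} = cball p (R / c)"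
  proof -
    have "bb ^ m * z + \<psi> = bb ^ m * (z - p)" for z using bm by (simp add: p_def field_simps)
    then have e: "cmod (bb ^ m * z + \<psi>) = c * cmod (z - p)" for z by (simp add: norm_mult c_def norm_power)
    have iff: "bb ^ m * z + \<psi> \<in> cball 0 R \<longleftrightarrow> z \<in> cball p (R / c)" for z
    proof -
      have "bb ^ m * z + \<psi> \<in> cball 0 R \<longleftrightarrow> cmod (bb ^ m * z + \<psi>) \<le> R" by simp
      also have "\<dots> \<longleftrightarrow> c * cmod (z - p) \<le> R" by (simp only: e)
      also have "\<dots> \<longleftrightarrow> cmod (z - p) \<le> R / c" using c1 by (simp add: field_simps)
      also have "\<dots> \<longleftrightarrow> z \<in> cball p (R / c)" by (simp add: dist_norm norm_minus_commute)
      finally show ?thesis .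
    qed
    show ?thesis unfolding F by (rule set_eqI) (simp only: mem_Collect_eq iff)
  qed
  have cnz: "c \<noteq> 0" using c1 by simp
  define T :: "complex \<Rightarrow> complex" where "T = (\<lambda>x. - (c *\<^sub>R p) + c *\<^sub>R x)"
  have Tm: "T \<in> borel_measurable borel" unfolding T_def by simp
  have pre2: "T -` cball 0 R = cball p (R / c)"
  proof -
    have "- (c *\<^sub>R p) + c *\<^sub>R x = c *\<^sub>R (x - p)" for x by (simp add: algebra_simps)
    then have e: "cmod (T x) = c * cmod (x - p)" for x using c1 by (simp add: T_def)
    have iff: "T x \<in> cball 0 R \<longleftrightarrow> x \<in> cball p (R / c)" for x
    proof -
      have "T x \<in> cball 0 R \<longleftrightarrow> cmod (T x) \<le> R" by simp
      also have "\<dots> \<longleftrightarrow> c * cmod (x - p) \<le> R" by (simp only: e)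
      also have "\<dots> \<longleftrightarrow> cmod (x - p) \<le> R / c" using c1 by (simp add: field_simps)
      also have "\<dots> \<longleftrightarrow> x \<in> cball p (R / c)" by (simp add: dist_norm norm_minus_commute)
      finally show ?thesis .
    qed
    show ?thesis by (rule set_eqI) (simp only: vimage_eq iff)
  qed
  have L: "(lborel :: complex measure) = density (distr lborel borel T) (\<lambda>_. \<bar>c\<bar> ^ DIM(complex))"
    using lborel_affine[OF cnz, of "- (c *\<^sub>R p)"] unfolding T_def .
  have "emeasure (lborel :: complex measure) (cball 0 R)
      = emeasure (density (distr lborel borel T) (\<lambda>_. \<bar>c\<bar> ^ DIM(complex))) (cball 0 R)"
    by (subst L) (rule refl)
  also have "\<dots> = ennreal (c ^ 2) * emeasure lborel (cball p (R / c))"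
    using c1 Tm by (simp add: emeasure_density_const emeasure_distr pre2)
  finally have E: "emeasure (lborel :: complex measure) (cball 0 R) = ennreal (c ^ 2) * emeasure lborel (cball p (R / c))" .
  have MF: "Mf bb = lborel" using False by (simp add: Mf_def)
  have "emeasure (Mf bb) (Iplus_factor bb) = ennreal (c ^ 2) * emeasure (Mf bb) {z. bb ^ m * z + \<psi> \<in> Iplus_factor bb}"
    apply (subst pre) apply (subst F) apply (subst MF)+ by (rule E)
  moreover have "c ^ 2 \<ge> cmod bb ^ m" using c1 by (simp add: c_def power2_eq_square)
  ultimately show ?thesis by blast
qed

lemma Mf_finite: "emeasure (Mf bb) (Iplus_factor bb) < \<infinity>"
proof (cases "bb \<in> \<real>")
  case True
  have b: "bounded (complex_of_real -` Iplus_factor bb)"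
  proof -
    obtain r where r: "\<forall>x\<in>Iplus_factor bb. norm x \<le> r" using bounded_Iplus_factor bounded_iff by blast
    then have "\<forall>x\<in>complex_of_real -` Iplus_factor bb. norm x \<le> r" by auto
    then show ?thesis by (auto simp: bounded_iff)
  qed
  have "emeasure (Mf bb) (Iplus_factor bb) = emeasure lborel (complex_of_real -` Iplus_factor bb)"
    using True by (simp add: Mf_def emeasure_distr)
  then show ?thesis using emeasure_bounded_finite[OF b] by simp
next
  case False
  then show ?thesis using emeasure_bounded_finite[OF bounded_Iplus_factor] by (simp add: Mf_def)
qed

lemma Iplus_PiE: "Iplus b d = PiE {1..d} (\<lambda>j. Iplus_factor (b j))"
  by (simp add: Iplus_def)

lemma A_measure:
  assumes bj: "\<forall>j\<in>{1..d}. cmod (b j) > 1"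
  shows "Tinv_word b d w ` Iplus b d \<in> sets (Kmeasure b d)"
    and "ennreal (cmod (\<Prod>j\<in>{1..d}. b j) ^ length w) * emeasure (Kmeasure b d) (Tinv_word b d w ` Iplus b d)
           \<le> emeasure (Kmeasure b d) (Iplus b d)"
    and "emeasure (Kmeasure b d) (Iplus b d) < \<infinity>"
    and "Iplus b d \<in> sets (Kmeasure b d)"
proof -
  interpret P: product_sigma_finite "\<lambda>j. Mf (b j)"
    unfolding product_sigma_finite_def using sigma_finite_Mf by simp
  have nz: "\<forall>j\<in>{1..d}. b j \<noteq> 0" using bj by auto
  define m where "m = length w"
  define pre where "pre j = {z. b j ^ m * z + psi w (b j) \<in> Iplus_factor (b j)}" for j
  have pre_borel: "pre j \<in> sets borel" for j unfolding pre_def by simp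
  have pre_sets: "pre j \<in> sets (Mf (b j))" for j using pre_borel by simp
  have AW: "Tinv_word b d w ` Iplus b d = PiE {1..d} pre"
    unfolding Tinv_word_image_PiE[OF nz] pre_def phi_eq m_def ..
  show "Tinv_word b d w ` Iplus b d \<in> sets (Kmeasure b d)"
    unfolding AW Kmeasure_Mf by (rule sets_PiM_I_finite) (auto simp: pre_sets pre_borel)
  show "Iplus b d \<in> sets (Kmeasure b d)"
    unfolding Iplus_PiE Kmeasure_Mf by (rule sets_PiM_I_finite) auto
  have EA: "emeasure (Kmeasure b d) (Tinv_word b d w ` Iplus b d) = (\<Prod>j\<in>{1..d}. emeasure (Mf (b j)) (pre j))"
    unfolding AW Kmeasure_Mf by (rule P.emeasure_PiM) (auto simp: pre_sets pre_borel)
  have EI: "emeasure (Kmeasure b d) (Iplus b d) = (\<Prod>j\<in>{1..d}. emeasure (Mf (b j)) (Iplus_factor (b j)))"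
    unfolding Iplus_PiE Kmeasure_Mf by (rule P.emeasure_PiM) auto
  show "emeasure (Kmeasure b d) (Iplus b d) < \<infinity>"
    unfolding EI using Mf_finite by (simp add: less_top[symmetric] ennreal_prod_eq_top)
  have fac: "ennreal (cmod (b j) ^ m) * emeasure (Mf (b j)) (pre j) \<le> emeasure (Mf (b j)) (Iplus_factor (b j))"
    if j: "j \<in> {1..d}" for j
  proof -
    obtain k where k: "k \<ge> cmod (b j) ^ m"
      "emeasure (Mf (b j)) (Iplus_factor (b j)) = ennreal k * emeasure (Mf (b j)) (pre j)"
      using factor_measure[of "b j" "psi w (b j)" m] bj j psi_real unfolding pre_def by blast
    have "ennreal (cmod (b j) ^ m) * emeasure (Mf (b j)) (pre j) \<le> ennreal k * emeasure (Mf (b j)) (pre j)"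
      by (intro mult_right_mono ennreal_leI k(1)) simp
    then show ?thesis using k by simp
  qed
  have "ennreal (cmod (\<Prod>j\<in>{1..d}. b j) ^ m) = (\<Prod>j\<in>{1..d}. ennreal (cmod (b j) ^ m))"
    by (simp add: prod_ennreal prod_norm[symmetric] prod_power_distrib)
  then have "ennreal (cmod (\<Prod>j\<in>{1..d}. b j) ^ m) * emeasure (Kmeasure b d) (Tinv_word b d w ` Iplus b d)
      = (\<Prod>j\<in>{1..d}. ennreal (cmod (b j) ^ m) * emeasure (Mf (b j)) (pre j))"
    by (simp add: EA prod.distrib)
  also have "\<dots> \<le> emeasure (Kmeasure b d) (Iplus b d)"
    unfolding EI by (rule prod_mono_ennreal) (rule fac)
  finally show "ennreal (cmod (\<Prod>j\<in>{1..d}. b j) ^ length w) * emeasure (Kmeasure b d) (Tinv_word b d w ` Iplus b d)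
           \<le> emeasure (Kmeasure b d) (Iplus b d)" by (simp add: m_def)
qed

theorem proposition2p2:
  fixes \<beta> :: real and b :: "nat \<Rightarrow> complex" and d s n :: nat
  assumes "1 \<le> d" and "1 < \<beta>" and "\<beta> < 2"
    and "algebraic_int \<beta>"
    and "\<forall>z\<in>galois_conjugates (complex_of_real \<beta>). cmod z \<noteq> 1"
    and "b 1 = complex_of_real \<beta>"
    and "bij_betw b {1..d+s+1} (galois_conjugates (complex_of_real \<beta>))"
    and "\<forall>j\<in>{1..d}. cmod (b j) > 1"
    and "\<forall>j\<in>{d+1..d+s}. cmod (b j) < 1"
    and "b (d+s+1) \<in> \<real>" and "cmod (b (d+s+1)) > 1"
  shows "(LINT x : Iplus b d | Kmeasure b d. ((Pop b d ^^ n) (indicator (Iplus b d)) x)\<^sup>2)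
           \<le> measure (Kmeasure b d) (Iplus b d)
              * (cmod (\<Prod>j\<in>{1..d}. b j) / 4) ^ n * real (overlaps b d n)"
proof -
  have bj: "\<forall>j\<in>{1..d}. cmod (b j) > 1" using assms by blast
  have nz: "\<forall>j\<in>{1..d}. b j \<noteq> 0" using bj by auto
  define c where "c = cmod (\<Prod>j\<in>{1..d}. b j)"
  define K where "K = Kmeasure b d"
  define I where "I = Iplus b d"
  define W where "W = words n"
  define A where "A w = Tinv_word b d w ` Iplus b d" for w
  define Ov where "Ov = {(a, c). a \<in> words n \<and> c \<in> words n \<and>
      Tinv_word b d a ` Iplus b d \<inter> Tinv_word b d c ` Iplus b d \<noteq> {}}"
  define mI where "mI = measure K I"
  have c1: "c \<ge> 1" unfolding c_def prod_norm[symmetric]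
    using bj by (intro prod_ge_1) (auto intro: less_imp_le)
  have finW: "finite W" by (simp add: W_def finite_words)
  have lenW: "w \<in> W \<Longrightarrow> length w = n" for w by (simp add: W_def words_def)
  have Isets: "I \<in> sets K" and Ifin: "emeasure K I < \<infinity>"
    using A_measure(3,4)[OF bj] by (simp_all add: I_def K_def)
  have Asets: "A w \<in> sets K" for w using A_measure(1)[OF bj] by (simp add: A_def K_def)
  have Ale: "ennreal (c ^ n) * emeasure K (A w) \<le> emeasure K I" if "w \<in> W" for w
    using A_measure(2)[OF bj, of w] lenW[OF that] by (simp add: A_def K_def I_def c_def)
  have Afin: "emeasure K (A w) \<noteq> \<infinity>" if "w \<in> W" for w
  proof
    assume "emeasure K (A w) = \<infinity>"
    then have "ennreal (c ^ n) * emeasure K (A w) = \<infinity>" using c1 by (simp add: ennreal_mult_eq_top_iff)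
    then show False using Ale[OF that] Ifin by (simp add: top_unique)
  qed
  have Abound: "c ^ n * measure K (A w) \<le> mI" if "w \<in> W" for w
  proof -
    have eA: "emeasure K (A w) = ennreal (measure K (A w))" using Afin[OF that] by (simp add: emeasure_eq_ennreal_measure)
    have eI: "emeasure K I = ennreal mI" using Ifin by (simp add: emeasure_eq_ennreal_measure mI_def)
    have "ennreal (c ^ n * measure K (A w)) \<le> ennreal mI"
      using Ale[OF that] c1 unfolding eA eI by (simp add: ennreal_mult)
    then show ?thesis by (simp add: ennreal_le_iff mI_def)
  qed
  have ext: "x \<in> I \<Longrightarrow> x \<in> extensional {1..d}" for x by (auto simp: I_def Iplus_def PiE_def)
  have indA: "indicator I (Tw b d w x) = (indicator (A w) x :: real)" if "x \<in> I" for w x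
  proof -
    have "Tw b d w x \<in> I \<longleftrightarrow> x \<in> A w"
      using ext[OF that] unfolding A_def Tinv_word_image[OF nz] I_def by auto
    then show ?thesis by (simp add: indicator_def)
  qed
  define g where "g x = (\<Sum>p\<in>W \<times> W. (c / 2) ^ (2 * n) * indicator (I \<inter> A (fst p) \<inter> A (snd p)) x :: real)" for x
  have pw: "indicator I x * ((Pop b d ^^ n) (indicator (Iplus b d)) x)\<^sup>2 = g x" for x
  proof (cases "x \<in> I")
    case False
    then show ?thesis by (simp add: g_def)
  next
    case True
    have sq: "(\<Sum>w\<in>W. f w)\<^sup>2 = (\<Sum>w\<in>W. \<Sum>w'\<in>W. f w * f w')" for f :: "int list \<Rightarrow> real"
      by (simp add: power2_eq_square sum_product)
    have pw2: "((c / 2) ^ n)\<^sup>2 = (c / 2) ^ (2 * n)" by (metis power_mult mult.commute)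
    have "(Pop b d ^^ n) (indicator (Iplus b d)) x = (c / 2) ^ n * (\<Sum>w\<in>W. indicator (A w) x)"
      unfolding Pop_pow c_def[symmetric] W_def[symmetric] I_def[symmetric] using indA[OF True] by simp
    then have "((Pop b d ^^ n) (indicator (Iplus b d)) x)\<^sup>2
        = (c / 2) ^ (2 * n) * (\<Sum>w\<in>W. \<Sum>w'\<in>W. indicator (A w) x * indicator (A w') x)"
      using sq pw2 by (simp add: power_mult_distrib)
    also have "\<dots> = (c / 2) ^ (2 * n) * (\<Sum>p\<in>W \<times> W. indicator (A (fst p)) x * indicator (A (snd p)) x)"
      by (simp add: sum.cartesian_product case_prod_beta')
    also have "\<dots> = g x"
      unfolding g_def sum_distrib_left using True by (intro sum.cong) (auto simp: indicator_def)
    finally show ?thesis using True by simp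
  qed
  have Ssets: "I \<inter> A (fst p) \<inter> A (snd p) \<in> sets K" for p using Isets Asets by auto
  have Sfin: "emeasure K (I \<inter> A (fst p) \<inter> A (snd p)) < \<infinity>" for p
  proof -
    have "emeasure K (I \<inter> A (fst p) \<inter> A (snd p)) \<le> emeasure K I"
      using Isets by (intro emeasure_mono) auto
    then show ?thesis using Ifin by (rule le_less_trans)
  qed
  have "(LINT x : Iplus b d | Kmeasure b d. ((Pop b d ^^ n) (indicator (Iplus b d)) x)\<^sup>2)
      = integral\<^sup>L K g"
    unfolding set_lebesgue_integral_def K_def[symmetric] I_def[symmetric] using pw by (simp add: I_def)
  also have "\<dots> = (\<Sum>p\<in>W \<times> W. (c / 2) ^ (2 * n) * measure K (I \<inter> A (fst p) \<inter> A (snd p)))"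
  proof -
    have "integral\<^sup>L K g = (\<Sum>p\<in>W \<times> W. integral\<^sup>L K (\<lambda>x. (c / 2) ^ (2 * n) * indicator (I \<inter> A (fst p) \<inter> A (snd p)) x))"
      unfolding g_def by (rule Bochner_Integration.integral_sum) (use Ssets Sfin in \<open>auto intro!: integrable_mult_right\<close>)
    also have "\<dots> = (\<Sum>p\<in>W \<times> W. (c / 2) ^ (2 * n) * measure K (I \<inter> A (fst p) \<inter> A (snd p)))"
    proof (rule sum.cong)
      fix p
      have "I \<inter> A (fst p) \<inter> A (snd p) \<inter> space K = I \<inter> A (fst p) \<inter> A (snd p)"
        using sets.sets_into_space[OF Ssets[of p]] by blast
      then show "integral\<^sup>L K (\<lambda>x. (c / 2) ^ (2 * n) * indicator (I \<inter> A (fst p) \<inter> A (snd p)) x)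
          = (c / 2) ^ (2 * n) * measure K (I \<inter> A (fst p) \<inter> A (snd p))"
        by simp
    qed simp
    finally show ?thesis .
  qed
  also have "\<dots> \<le> (\<Sum>p\<in>W \<times> W. if p \<in> Ov then (c / 2) ^ (2 * n) * (mI / c ^ n) else 0)"
  proof (rule sum_mono)
    fix p assume p: "p \<in> W \<times> W"
    show "(c / 2) ^ (2 * n) * measure K (I \<inter> A (fst p) \<inter> A (snd p))
        \<le> (if p \<in> Ov then (c / 2) ^ (2 * n) * (mI / c ^ n) else 0)"
    proof (cases "p \<in> Ov")
      case False
      then have "A (fst p) \<inter> A (snd p) = {}" using p by (auto simp: Ov_def A_def W_def)
      then have "I \<inter> A (fst p) \<inter> A (snd p) = {}" by auto
      then show ?thesis using False by simp
    next
      case True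
      have "measure K (I \<inter> A (fst p) \<inter> A (snd p)) \<le> measure K (A (fst p))"
      proof (rule measure_mono_fmeasurable)
        show "A (fst p) \<in> fmeasurable K"
          using Afin[of "fst p"] p Asets by (auto simp: fmeasurable_def less_top)
      qed (use Ssets in auto)
      also have "\<dots> \<le> mI / c ^ n"
        using Abound[of "fst p"] p c1 by (auto simp: field_simps)
      finally have "measure K (I \<inter> A (fst p) \<inter> A (snd p)) \<le> mI / c ^ n" .
      then have "(c / 2) ^ (2 * n) * measure K (I \<inter> A (fst p) \<inter> A (snd p)) \<le> (c / 2) ^ (2 * n) * (mI / c ^ n)"
        using c1 by (intro mult_left_mono) auto
      then show ?thesis using True by simp
    qed
  qed
  also have "\<dots> = (\<Sum>p\<in>(W \<times> W) \<inter> Ov. (c / 2) ^ (2 * n) * (mI / c ^ n))"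
    using finW by (intro sum.inter_restrict[symmetric]) simp
  also have "(W \<times> W) \<inter> Ov = Ov" by (auto simp: Ov_def W_def)
  also have "(\<Sum>p\<in>Ov. (c / 2) ^ (2 * n) * (mI / c ^ n)) = real (card Ov) * ((c / 2) ^ (2 * n) * (mI / c ^ n))"
    by simp
  also have "(c / 2) ^ (2 * n) * (mI / c ^ n) = mI * (c / 4) ^ n"
  proof -
    have "(c / 2) ^ (2 * n) = ((c / 4) * c) ^ n" by (simp add: power_mult power2_eq_square)
    then show ?thesis using c1 by (simp add: power_mult_distrib field_simps)
  qed
  finally show ?thesis
    by (simp add: mI_def K_def I_def c_def overlaps_def Ov_def mult.commute mult.left_commute)
qed

end
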